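(* Let $n,k\ge 1$ be integers and let $X$ be an isotropic random vector in $\mathbb{R}^n$. Assume that linear forms satisfy the following small-ball condition: there is some $\lambda>0$ for which $$\Pr\big(|\langle x,X\rangle|\ge \lambda\|x\|_{\ell_2^n}\big)\ge 99/100\quad\text{for every } x\in\mathbb{R}^n.$$ Let $X_1,\dots,X_k$ be independent copies of $X$ and let $\Gamma:\mathbb{R}^n\to\mathbb{R}^k$ be the random matrix $\Gamma=k^{-1/2}\sum_{i=1}^k\langle X_i,\cdot\rangle e_i$. Then there exists a constant $c$ that depends only on $\lambda$ such that, for a convex body $T\subset\mathbb{R}^n$, with probability at least $3/4$, $$\operatorname{diam}\big(T\cap\ker(\Gamma)\big)\le \frac{c}{\sqrt{k}}\cdot\max\Big\{\mathbb{E}\|G\|_{T^\circ},\ \mathbb{E}\Big\|k^{-1/2}\sum_{i=1}^k X_i\Big\|_{T^\circ}\Big\},$$ where $\operatorname{diam}$ denotes the Euclidean ($\ell_2^n$) diameter.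
   Context: A random vector $X$ in $\mathbb{R}^n$ (with distribution $\mu$) is called isotropic if $\mu$ is symmetric (i.e. $X$ and $-X$ have the same distribution) and $\mathbb{E}\langle x,X\rangle^2=\|x\|_{\ell_2^n}^2$ for every $x\in\mathbb{R}^n$. A convex body is a convex, centrally-symmetric subset of $\mathbb{R}^n$ with non-empty interior. $(e_i)_{i=1}^k$ is the standard basis of $\mathbb{R}^k$. For $y\in\mathbb{R}^n$, $\|y\|_{T^\circ}=\sup_{t\in T}|\langle y,t\rangle|$. $G=(g_1,\dots,g_n)$ denotes the standard Gaussian vector in $\mathbb{R}^n$, so $\mathbb{E}\|G\|_{T^\circ}=\mathbb{E}\sup_{t\in T}|\langle G,t\rangle|$. *)

theory Defs
  imports "HOL-Probability.Probability"
begin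

text \<open>Convention: a vector of R^n is a function nat => real vanishing at indices >= n.
  Only the coordinates 0..n-1 are ever used for inner products / norms.\<close>

definition Rn :: "nat \<Rightarrow> (nat \<Rightarrow> real) set" where
  "Rn n = {x. \<forall>i. n \<le> i \<longrightarrow> x i = 0}"

definition inner_n :: "nat \<Rightarrow> (nat \<Rightarrow> real) \<Rightarrow> (nat \<Rightarrow> real) \<Rightarrow> real" where
  "inner_n n x y = (\<Sum>i<n. x i * y i)"

definition norm_n :: "nat \<Rightarrow> (nat \<Rightarrow> real) \<Rightarrow> real" where
  "norm_n n x = sqrt (\<Sum>i<n. (x i)\<^sup>2)"

text \<open>Euclidean diameter (possibly infinite; 0 for the empty set).\<close>
definition diam_n :: "nat \<Rightarrow> (nat \<Rightarrow> real) set \<Rightarrow> ennreal" where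
  "diam_n n S = (SUP x\<in>S. SUP y\<in>S. ennreal (norm_n n (\<lambda>i. x i - y i)))"

definition dual_norm :: "nat \<Rightarrow> (nat \<Rightarrow> real) set \<Rightarrow> (nat \<Rightarrow> real) \<Rightarrow> ennreal" where
  "dual_norm n T y = (SUP t\<in>T. ennreal \<bar>inner_n n y t\<bar>)"

definition convex_body :: "nat \<Rightarrow> (nat \<Rightarrow> real) set \<Rightarrow> bool" where
  "convex_body n T \<longleftrightarrow> T \<subseteq> Rn n
     \<and> (\<forall>x\<in>T. \<forall>y\<in>T. \<forall>u::real. 0 \<le> u \<and> u \<le> 1 \<longrightarrow> (\<lambda>i. u * x i + (1 - u) * y i) \<in> T)
     \<and> (\<forall>x\<in>T. (\<lambda>i. - x i) \<in> T)
     \<and> (\<exists>x\<in>Rn n. \<exists>r>0. {y\<in>Rn n. norm_n n (\<lambda>i. y i - x i) < r} \<subseteq> T)"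

abbreviation RnM :: "nat \<Rightarrow> (nat \<Rightarrow> real) measure" where
  "RnM n \<equiv> PiM {..<n} (\<lambda>_. borel)"

abbreviation gaussM :: "nat \<Rightarrow> (nat \<Rightarrow> real) measure" where
  "gaussM n \<equiv> PiM {..<n} (\<lambda>_. density lborel (\<lambda>x. ennreal (std_normal_density x)))"

text \<open>Kernel of Gamma = k^(-1/2) sum_i <X_i, .> e_i (as a map R^n -> R^k), as a subset of R^n,
  for a realisation w = (X_0,...,X_(k-1)) of the k copies.\<close>
definition ker_Gamma :: "nat \<Rightarrow> nat \<Rightarrow> (nat \<Rightarrow> nat \<Rightarrow> real) \<Rightarrow> (nat \<Rightarrow> real) set" where
  "ker_Gamma n k w = {x\<in>Rn n. (\<lambda>j. (\<Sum>i<k. inner_n n (w i) x * (if j = i then 1 else 0)) / sqrt (real k)) = (\<lambda>j. 0)}"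

end

theory Submission
  imports Defs "HOL-Library.Countable"
begin


definition sg :: "nat set \<Rightarrow> nat \<Rightarrow> real" where
  "sg S i = (if i \<in> S then 1 else -1)"

lemma key_max:
  fixes c a :: "'x \<Rightarrow> real"
  assumes "finite F" "F \<noteq> {}"
  shows "(MAX x\<in>F. c x + \<bar>a x\<bar>) + (MAX x\<in>F. c x - \<bar>a x\<bar>)
       \<le> (MAX x\<in>F. c x + a x) + (MAX x\<in>F. c x - a x)"
proof -
  have "(MAX x\<in>F. c x + \<bar>a x\<bar>) \<in> (\<lambda>x. c x + \<bar>a x\<bar>) ` F"
    using assms by (intro Max_in) auto
  then obtain x where x: "x \<in> F" "(MAX x\<in>F. c x + \<bar>a x\<bar>) = c x + \<bar>a x\<bar>"
    by auto
  have "(MAX x\<in>F. c x - \<bar>a x\<bar>) \<in> (\<lambda>x. c x - \<bar>a x\<bar>) ` F"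
    using assms by (intro Max_in) auto
  then obtain y where y: "y \<in> F" "(MAX x\<in>F. c x - \<bar>a x\<bar>) = c y - \<bar>a y\<bar>"
    by auto
  have m1: "c z + a z \<le> (MAX x\<in>F. c x + a x)" if "z \<in> F" for z
    using assms that by (intro Max_ge) auto
  have m2: "c z - a z \<le> (MAX x\<in>F. c x - a x)" if "z \<in> F" for z
    using assms that by (intro Max_ge) auto
  show ?thesis
  proof (cases "a x \<ge> a y")
    case True
    then have "c x + \<bar>a x\<bar> + (c y - \<bar>a y\<bar>) \<le> (c x + a x) + (c y - a y)" by auto
    then show ?thesis using x y m1[OF x(1)] m2[OF y(1)] by linarith
  next
    case False
    then have "c x + \<bar>a x\<bar> + (c y - \<bar>a y\<bar>) \<le> (c y + a y) + (c x - a x)" by auto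
    then show ?thesis using x y m1[OF y(1)] m2[OF x(1)] by linarith
  qed
qed

lemma sum_Pow_lessThan_Suc:
  "(\<Sum>S\<in>Pow {..<Suc k}. g S) = (\<Sum>S\<in>Pow {..<k}. g (insert k S) + g S)"
proof -
  have "Pow {..<Suc k} = Pow {..<k} \<union> insert k ` Pow {..<k}"
    by (simp add: lessThan_Suc Pow_insert)
  moreover have "Pow {..<k} \<inter> insert k ` Pow {..<k} = {}" by auto
  moreover have "inj_on (insert k) (Pow {..<k})"
    by (auto simp: inj_on_def)
  ultimately show ?thesis
    by (simp add: sum.union_disjoint sum.reindex sum.distrib add.commute)
qed

lemma sg_insert_k: "i < k \<Longrightarrow> S \<subseteq> {..<k} \<Longrightarrow> sg (insert k S) i = sg S i"
  by (auto simp: sg_def)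

lemma sg_k: "S \<subseteq> {..<k} \<Longrightarrow> sg (insert k S) k = 1 \<and> sg S k = -1"
  by (auto simp: sg_def)

lemma contraction:
  fixes a :: "nat \<Rightarrow> 'x \<Rightarrow> real"
  assumes "finite F" "F \<noteq> {}"
  shows "(\<Sum>S\<in>Pow {..<k}. MAX x\<in>F. b x + (\<Sum>i<k. sg S i * \<bar>a i x\<bar>))
       \<le> (\<Sum>S\<in>Pow {..<k}. MAX x\<in>F. b x + (\<Sum>i<k. sg S i * a i x))"
proof (induction k arbitrary: b)
  case 0
  then show ?case by simp
next
  case (Suc k)
  have e1: "(\<Sum>i<Suc k. sg (insert k S) i * f i) = (\<Sum>i<k. sg S i * f i) + f k"
    and e2: "(\<Sum>i<Suc k. sg S i * f i) = (\<Sum>i<k. sg S i * f i) - f k"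
    if "S \<in> Pow {..<k}" for S and f :: "nat \<Rightarrow> real"
    using that by (auto simp: sg_insert_k sg_k intro!: sum.cong)
  have "(\<Sum>S\<in>Pow {..<Suc k}. MAX x\<in>F. b x + (\<Sum>i<Suc k. sg S i * \<bar>a i x\<bar>))
     = (\<Sum>S\<in>Pow {..<k}. (MAX x\<in>F. (b x + (\<Sum>i<k. sg S i * \<bar>a i x\<bar>)) + \<bar>a k x\<bar>)
                        + (MAX x\<in>F. (b x + (\<Sum>i<k. sg S i * \<bar>a i x\<bar>)) - \<bar>a k x\<bar>))"
    unfolding sum_Pow_lessThan_Suc
  proof (intro sum.cong refl)
    fix S assume S: "S \<in> Pow {..<k}"
    show "(MAX x\<in>F. b x + (\<Sum>i<Suc k. sg (insert k S) i * \<bar>a i x\<bar>)) +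
          (MAX x\<in>F. b x + (\<Sum>i<Suc k. sg S i * \<bar>a i x\<bar>)) =
          (MAX x\<in>F. b x + (\<Sum>i<k. sg S i * \<bar>a i x\<bar>) + \<bar>a k x\<bar>) +
          (MAX x\<in>F. b x + (\<Sum>i<k. sg S i * \<bar>a i x\<bar>) - \<bar>a k x\<bar>)"
      by (simp only: e1[OF S] e2[OF S]) (simp add: algebra_simps)
  qed
  also have "\<dots> \<le> (\<Sum>S\<in>Pow {..<k}. (MAX x\<in>F. (b x + (\<Sum>i<k. sg S i * \<bar>a i x\<bar>)) + a k x)
                        + (MAX x\<in>F. (b x + (\<Sum>i<k. sg S i * \<bar>a i x\<bar>)) - a k x))"
    by (intro sum_mono key_max assms)
  also have "\<dots> = (\<Sum>S\<in>Pow {..<k}. (MAX x\<in>F. (b x + a k x) + (\<Sum>i<k. sg S i * \<bar>a i x\<bar>)))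
                + (\<Sum>S\<in>Pow {..<k}. (MAX x\<in>F. (b x - a k x) + (\<Sum>i<k. sg S i * \<bar>a i x\<bar>)))"
    by (simp add: sum.distrib algebra_simps)
  also have "\<dots> \<le> (\<Sum>S\<in>Pow {..<k}. (MAX x\<in>F. (b x + a k x) + (\<Sum>i<k. sg S i * a i x)))
                + (\<Sum>S\<in>Pow {..<k}. (MAX x\<in>F. (b x - a k x) + (\<Sum>i<k. sg S i * a i x)))"
    by (intro add_mono Suc.IH)
  also have "\<dots> = (\<Sum>S\<in>Pow {..<Suc k}. MAX x\<in>F. b x + (\<Sum>i<Suc k. sg S i * a i x))"
    unfolding sum_Pow_lessThan_Suc sum.distrib[symmetric]
  proof (intro sum.cong refl)
    fix S assume S: "S \<in> Pow {..<k}"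
    show "(MAX x\<in>F. b x + a k x + (\<Sum>i<k. sg S i * a i x)) +
          (MAX x\<in>F. b x - a k x + (\<Sum>i<k. sg S i * a i x)) =
          (MAX x\<in>F. b x + (\<Sum>i<Suc k. sg (insert k S) i * a i x)) +
          (MAX x\<in>F. b x + (\<Sum>i<Suc k. sg S i * a i x))"
      by (simp only: e1[OF S] e2[OF S]) (simp add: algebra_simps)
  qed
  finally show ?case .
qed

lemma sum_Pow_neg:
  "(\<Sum>S\<in>Pow {..<k}. MAX x\<in>F. (\<Sum>i<k. - sg S i * f i x))
   = (\<Sum>S\<in>Pow {..<k}. MAX x\<in>F. (\<Sum>i<k. sg S i * f i x))"
proof (rule sum.reindex_bij_witness[of _ "\<lambda>S. {..<k} - S" "\<lambda>S. {..<k} - S"])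
  fix S assume S: "S \<in> Pow {..<k}"
  show "(MAX x\<in>F. (\<Sum>i<k. sg ({..<k} - S) i * f i x)) = (MAX x\<in>F. (\<Sum>i<k. - sg S i * f i x))"
    by (intro arg_cong[where f=Max] image_cong refl sum.cong) (auto simp: sg_def)
qed auto




lemma distr_PiM_dep:
  assumes fin: "finite I" and M: "prob_space M"
    and f[measurable]: "\<And>i. i \<in> I \<Longrightarrow> f i \<in> measurable M M"
    and fd: "\<And>i. i \<in> I \<Longrightarrow> distr M M (f i) = M"
  shows "distr (PiM I (\<lambda>_. M)) (PiM I (\<lambda>_. M)) (\<lambda>x. \<lambda>i\<in>I. f i (x i)) = PiM I (\<lambda>_. M)"
proof -
  interpret M: product_prob_space "\<lambda>_. M"
    by (intro product_prob_spaceI M)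
  have meas: "(\<lambda>x. \<lambda>i\<in>I. f i (x i)) \<in> measurable (PiM I (\<lambda>_. M)) (PiM I (\<lambda>_. M))"
  proof (intro measurable_restrict)
    fix i assume i: "i \<in> I"
    show "(\<lambda>x. f i (x i)) \<in> measurable (PiM I (\<lambda>_. M)) M"
      using measurable_compose[OF measurable_component_singleton[of i I "\<lambda>_. M"] f[OF i]] i by simp
  qed
  show ?thesis
  proof (rule M.PiM_eqI[OF fin])
    show "sets (distr (PiM I (\<lambda>_. M)) (PiM I (\<lambda>_. M)) (\<lambda>x. \<lambda>i\<in>I. f i (x i))) = sets (PiM I (\<lambda>_. M))"
      by simp
    fix A assume A: "\<And>i. i \<in> I \<Longrightarrow> A i \<in> sets M"
    have "emeasure (distr (PiM I (\<lambda>_. M)) (PiM I (\<lambda>_. M)) (\<lambda>x. \<lambda>i\<in>I. f i (x i))) (Pi\<^sub>E I A)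
        = emeasure (PiM I (\<lambda>_. M)) ((\<lambda>x. \<lambda>i\<in>I. f i (x i)) -` Pi\<^sub>E I A \<inter> space (PiM I (\<lambda>_. M)))"
      by (intro emeasure_distr meas sets_PiM_I_finite fin A)
    also have "(\<lambda>x. \<lambda>i\<in>I. f i (x i)) -` Pi\<^sub>E I A \<inter> space (PiM I (\<lambda>_. M)) = Pi\<^sub>E I (\<lambda>i. f i -` A i \<inter> space M)"
      using A by (auto simp: space_PiM PiE_def Pi_def extensional_def)
    also have "emeasure (PiM I (\<lambda>_. M)) (Pi\<^sub>E I (\<lambda>i. f i -` A i \<inter> space M)) =
          (\<Prod>i\<in>I. emeasure M (f i -` A i \<inter> space M))"
      using A by (intro M.emeasure_PiM fin) (auto intro: measurable_sets)
    also have "\<dots> = (\<Prod>i\<in>I. emeasure (distr M M (f i)) (A i))"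
      using A by (intro prod.cong emeasure_distr [symmetric]) auto
    also have "\<dots> = (\<Prod>i\<in>I. emeasure M (A i))"
      using fd by simp
    finally show "emeasure (distr (PiM I (\<lambda>_. M)) (PiM I (\<lambda>_. M)) (\<lambda>x. \<lambda>i\<in>I. f i (x i))) (Pi\<^sub>E I A)
        = (\<Prod>i\<in>I. emeasure M (A i))" .
  qed
qed

lemma PiM_comp_integrable:
  fixes g :: "'a \<Rightarrow> real"
  assumes "prob_space M" "i \<in> I" "integrable M g"
  shows "integrable (PiM I (\<lambda>_. M)) (\<lambda>\<omega>. g (\<omega> i))"
proof -
  have d: "distr (PiM I (\<lambda>_. M)) M (\<lambda>\<omega>. \<omega> i) = M"
    using distr_PiM_component[of I "\<lambda>_. M" i] assms by auto
  have "integrable (distr (PiM I (\<lambda>_. M)) M (\<lambda>\<omega>. \<omega> i)) g" using d assms by simp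
  moreover have "g \<in> borel_measurable M" using assms by auto
  ultimately show ?thesis
    using integrable_distr_eq[of "\<lambda>\<omega>. \<omega> i" "PiM I (\<lambda>_. M)" M g] assms by auto
qed

lemma PiM_comp_integral:
  fixes g :: "'a \<Rightarrow> real"
  assumes "prob_space M" "i \<in> I" "integrable M g"
  shows "(\<integral>\<omega>. g (\<omega> i) \<partial>PiM I (\<lambda>_. M)) = (\<integral>y. g y \<partial>M)"
proof -
  have d: "distr (PiM I (\<lambda>_. M)) M (\<lambda>\<omega>. \<omega> i) = M"
    using distr_PiM_component[of I "\<lambda>_. M" i] assms by auto
  have "(\<integral>y. g y \<partial>M) = (\<integral>y. g y \<partial>distr (PiM I (\<lambda>_. M)) M (\<lambda>\<omega>. \<omega> i))" using d by simp
  also have "\<dots> = (\<integral>\<omega>. g (\<omega> i) \<partial>PiM I (\<lambda>_. M))"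
    using assms by (intro integral_distr) (auto simp: borel_measurable_integrable)
  finally show ?thesis ..
qed




locale symset =
  fixes M :: "'a measure" and L :: "'x \<Rightarrow> 'a \<Rightarrow> real" and s :: "'a \<Rightarrow> 'a" and F :: "'x set"
  assumes M: "prob_space M" and finF: "finite F" and neF: "F \<noteq> {}"
    and Lint: "\<And>x. x \<in> F \<Longrightarrow> integrable M (L x)"
    and s_meas: "s \<in> measurable M M" and s_distr: "distr M M s = M"
    and Ls: "\<And>x y. x \<in> F \<Longrightarrow> y \<in> space M \<Longrightarrow> L x (s y) = - L x y"
begin

abbreviation PP :: "nat \<Rightarrow> (nat \<Rightarrow> 'a) measure" where
  "PP k \<equiv> PiM {..<k} (\<lambda>_. M)"

lemma intg: "j < K \<Longrightarrow> x \<in> F \<Longrightarrow> integrable (PP K) (\<lambda>\<omega>. L x (\<omega> j))"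
  by (intro PiM_comp_integrable M Lint) auto

lemma intg_abs: "j < K \<Longrightarrow> x \<in> F \<Longrightarrow> integrable (PP K) (\<lambda>\<omega>. \<bar>L x (\<omega> j)\<bar>)"
  using intg by (intro integrable_abs)

lemmas intg_rules = integrable_MAX[OF finF neF] Bochner_Integration.integrable_sum Bochner_Integration.integrable_mult_right
  Bochner_Integration.integrable_diff Bochner_Integration.integrable_add intg intg_abs integrable_const

lemma step3a:
  assumes "inj_on g {..<k}" "g ` {..<k} \<subseteq> {..<K}"
  shows "(\<integral>\<omega>. (MAX x\<in>F. \<Sum>i<k. c i * L x (\<omega> (g i))) \<partial>PP K)
       = (\<integral>\<omega>. (MAX x\<in>F. \<Sum>i<k. c i * L x (\<omega> i)) \<partial>PP k)"
proof -
  have d: "distr (PP K) (PP k) (\<lambda>\<omega>. \<lambda>n\<in>{..<k}. \<omega> (g n)) = PP k"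
    using distr_PiM_reindex[of "{..<K}" "\<lambda>_. M" g "{..<k}"] assms M by auto
  have meas: "(\<lambda>\<omega>. \<lambda>n\<in>{..<k}. \<omega> (g n)) \<in> measurable (PP K) (PP k)"
  proof (intro measurable_restrict)
    fix i assume i: "i \<in> {..<k}"
    then have "g i \<in> {..<K}" using assms by auto
    then show "(\<lambda>x. x (g i)) \<in> measurable (PP K) M"
      using measurable_component_singleton[of "g i" "{..<K}" "\<lambda>_. M"] by simp
  qed
  have intG: "integrable (PP k) (\<lambda>\<omega>. (MAX x\<in>F. \<Sum>i<k. c i * L x (\<omega> i)))"
    by (auto intro!: intg_rules)
  have "(\<integral>\<omega>. (MAX x\<in>F. \<Sum>i<k. c i * L x (\<omega> i)) \<partial>PP k)
      = (\<integral>\<omega>. (MAX x\<in>F. \<Sum>i<k. c i * L x (\<omega> i)) \<partial>distr (PP K) (PP k) (\<lambda>\<omega>. \<lambda>n\<in>{..<k}. \<omega> (g n)))"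
    using d by simp
  also have "\<dots> = (\<integral>\<omega>. (MAX x\<in>F. \<Sum>i<k. c i * L x ((\<lambda>n\<in>{..<k}. \<omega> (g n)) i)) \<partial>PP K)"
    using intG by (intro integral_distr meas) (auto simp: borel_measurable_integrable)
  also have "\<dots> = (\<integral>\<omega>. (MAX x\<in>F. \<Sum>i<k. c i * L x (\<omega> (g i))) \<partial>PP K)"
    by (intro Bochner_Integration.integral_cong refl) (auto intro!: arg_cong[where f=Max] image_cong sum.cong)
  finally show ?thesis ..
qed

lemma step3b:
  assumes "S \<subseteq> {..<k}"
  shows "(\<integral>\<omega>. (MAX x\<in>F. \<Sum>i<k. sg S i * L x (\<omega> i)) \<partial>PP k)
       = (\<integral>\<omega>. (MAX x\<in>F. \<Sum>i<k. L x (\<omega> i)) \<partial>PP k)"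
proof -
  define f where "f i = (if i \<in> S then (\<lambda>y. y) else s)" for i
  have fm: "f i \<in> measurable M M" for i using s_meas by (auto simp: f_def)
  have fd: "distr M M (f i) = M" for i
    using s_distr by (auto simp: f_def distr_id2)
  have d: "distr (PP k) (PP k) (\<lambda>\<omega>. \<lambda>i\<in>{..<k}. f i (\<omega> i)) = PP k"
    by (intro distr_PiM_dep M fm fd) auto
  have meas: "(\<lambda>\<omega>. \<lambda>i\<in>{..<k}. f i (\<omega> i)) \<in> measurable (PP k) (PP k)"
  proof (intro measurable_restrict)
    fix i assume i: "i \<in> {..<k}"
    show "(\<lambda>x. f i (x i)) \<in> measurable (PP k) M"
      using measurable_compose[OF measurable_component_singleton[of i "{..<k}" "\<lambda>_. M"] fm[of i]] i by simp
  qed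
  have intG: "integrable (PP k) (\<lambda>\<omega>. (MAX x\<in>F. \<Sum>i<k. L x (\<omega> i)))"
    by (auto intro!: intg_rules)
  have "(\<integral>\<omega>. (MAX x\<in>F. \<Sum>i<k. L x (\<omega> i)) \<partial>PP k)
      = (\<integral>\<omega>. (MAX x\<in>F. \<Sum>i<k. L x (\<omega> i)) \<partial>distr (PP k) (PP k) (\<lambda>\<omega>. \<lambda>i\<in>{..<k}. f i (\<omega> i)))"
    using d by simp
  also have "\<dots> = (\<integral>\<omega>. (MAX x\<in>F. \<Sum>i<k. L x ((\<lambda>i\<in>{..<k}. f i (\<omega> i)) i)) \<partial>PP k)"
    using intG by (intro integral_distr meas) (auto simp: borel_measurable_integrable)
  also have "\<dots> = (\<integral>\<omega>. (MAX x\<in>F. \<Sum>i<k. sg S i * L x (\<omega> i)) \<partial>PP k)"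
  proof -
    have eq: "L x (f i (\<omega> i)) = sg S i * L x (\<omega> i)"
      if \<omega>: "\<omega> \<in> space (PP k)" and x: "x \<in> F" and i: "i < k" for \<omega> x i
    proof -
      have "\<omega> i \<in> space M" using \<omega> i by (auto simp: space_PiM)
      then show ?thesis
        using i x by (auto simp: f_def sg_def Ls)
    qed
    show ?thesis
      by (intro Bochner_Integration.integral_cong refl) (auto intro!: arg_cong[where f=Max] image_cong sum.cong simp: eq)
  qed
  finally show ?thesis ..
qed

end



context symset begin

lemma intgI: "j \<in> I \<Longrightarrow> x \<in> F \<Longrightarrow> integrable (PiM I (\<lambda>_. M)) (\<lambda>\<omega>. L x (\<omega> j))"
  by (intro PiM_comp_integrable M Lint) auto

lemma intgI_abs: "j \<in> I \<Longrightarrow> x \<in> F \<Longrightarrow> integrable (PiM I (\<lambda>_. M)) (\<lambda>\<omega>. \<bar>L x (\<omega> j)\<bar>)"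
  using intgI by (intro integrable_abs)

lemma intgI_const: "integrable (PiM I (\<lambda>_. M)) (\<lambda>_. c)"
proof -
  interpret prob_space "PiM I (\<lambda>_. M)" by (intro prob_space_PiM M)
  show ?thesis by simp
qed

lemmas intg_rulesI = intgI_const integrable_MAX[OF finF neF] Bochner_Integration.integrable_sum Bochner_Integration.integrable_mult_right
  Bochner_Integration.integrable_diff Bochner_Integration.integrable_add intgI intgI_abs integrable_const

lemma reindex_int:
  fixes G :: "(nat \<Rightarrow> 'a) \<Rightarrow> real"
  assumes "inj_on g {..<k}" "g ` {..<k} \<subseteq> {..<K}" "integrable (PP k) G"
  shows "(\<integral>\<omega>. G \<omega> \<partial>PP k) = (\<integral>\<omega>. G (\<lambda>n\<in>{..<k}. \<omega> (g n)) \<partial>PP K)"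
proof -
  have d: "distr (PP K) (PP k) (\<lambda>\<omega>. \<lambda>n\<in>{..<k}. \<omega> (g n)) = PP k"
    using distr_PiM_reindex[of "{..<K}" "\<lambda>_. M" g "{..<k}"] assms M by auto
  have meas: "(\<lambda>\<omega>. \<lambda>n\<in>{..<k}. \<omega> (g n)) \<in> measurable (PP K) (PP k)"
  proof (intro measurable_restrict)
    fix i assume i: "i \<in> {..<k}"
    then have "g i \<in> {..<K}" using assms by auto
    then show "(\<lambda>x. x (g i)) \<in> measurable (PP K) M"
      using measurable_component_singleton[of "g i" "{..<K}" "\<lambda>_. M"] by simp
  qed
  have "(\<integral>\<omega>. G \<omega> \<partial>PP k) = (\<integral>\<omega>. G \<omega> \<partial>distr (PP K) (PP k) (\<lambda>\<omega>. \<lambda>n\<in>{..<k}. \<omega> (g n)))"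
    using d by simp
  also have "\<dots> = (\<integral>\<omega>. G (\<lambda>n\<in>{..<k}. \<omega> (g n)) \<partial>PP K)"
    using assms by (intro integral_distr meas) (auto simp: borel_measurable_integrable)
  finally show ?thesis .
qed

definition HH :: "nat \<Rightarrow> (nat \<Rightarrow> 'a) \<Rightarrow> real" where
  "HH k \<omega> = (MAX x\<in>F. \<Sum>i<k. \<bar>L x (\<omega> (k+i))\<bar> - \<bar>L x (\<omega> i)\<bar>)"

lemma step2:
  assumes S: "S \<subseteq> {..<k}"
  shows "(\<integral>\<omega>. HH k \<omega> \<partial>PP (2*k))
       = (\<integral>\<omega>. (MAX x\<in>F. \<Sum>i<k. sg S i * (\<bar>L x (\<omega> (k+i))\<bar> - \<bar>L x (\<omega> i)\<bar>)) \<partial>PP (2*k))"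
proof -
  define \<sigma> where "\<sigma> n = (if n < k \<and> n \<notin> S then n + k else if k \<le> n \<and> n < 2*k \<and> n - k \<notin> S then n - k else n)" for n
  have inj: "inj_on \<sigma> {..<2*k}"
    by (auto simp: inj_on_def \<sigma>_def split: if_splits)
  have img: "\<sigma> ` {..<2*k} \<subseteq> {..<2*k}"
    by (auto simp: \<sigma>_def)
  have intH: "integrable (PP (2*k)) (HH k)"
    unfolding HH_def by (intro integrable_MAX[OF finF neF] Bochner_Integration.integrable_sum Bochner_Integration.integrable_diff intgI_abs) auto
  have "(\<integral>\<omega>. HH k \<omega> \<partial>PP (2*k)) = (\<integral>\<omega>. HH k (\<lambda>n\<in>{..<2*k}. \<omega> (\<sigma> n)) \<partial>PP (2*k))"
    by (rule reindex_int[OF inj img intH])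
  also have "\<dots> = (\<integral>\<omega>. (MAX x\<in>F. \<Sum>i<k. sg S i * (\<bar>L x (\<omega> (k+i))\<bar> - \<bar>L x (\<omega> i)\<bar>)) \<partial>PP (2*k))"
  proof -
    have eq: "\<bar>L x (\<omega> (\<sigma> (k+i)))\<bar> - \<bar>L x (\<omega> (\<sigma> i))\<bar>
       = sg S i * (\<bar>L x (\<omega> (k+i))\<bar> - \<bar>L x (\<omega> i)\<bar>)" if i: "i < k" for \<omega> x i
      using i by (auto simp: \<sigma>_def sg_def add.commute)
    show ?thesis unfolding HH_def
      by (intro Bochner_Integration.integral_cong refl) (auto intro!: arg_cong[where f=Max] image_cong sum.cong simp: eq)
  qed
  finally show ?thesis .
qed

definition mm :: "'x \<Rightarrow> real" where "mm x = (\<integral>y. \<bar>L x y\<bar> \<partial>M)"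

lemma step1:
  "(\<integral>\<omega>. (MAX x\<in>F. \<Sum>i<k. mm x - \<bar>L x (\<omega> i)\<bar>) \<partial>PP k) \<le> (\<integral>\<omega>. HH k \<omega> \<partial>PP (2*k))"
proof -
  interpret PS: product_prob_space "\<lambda>_. M" by (intro product_prob_spaceI M)
  define I where "I = {..<k}"
  define J where "J = {k..<2*k}"
  have IJ: "I \<inter> J = {}" "finite I" "finite J" by (auto simp: I_def J_def)
  have U: "{..<2*k} = I \<union> J" by (auto simp: I_def J_def)
  have intH: "integrable (PiM (I \<union> J) (\<lambda>_. M)) (HH k)"
    unfolding HH_def U[symmetric] by (intro integrable_MAX[OF finF neF] Bochner_Integration.integrable_sum Bochner_Integration.integrable_diff intgI_abs) auto
  have fold: "(\<integral>\<omega>. HH k \<omega> \<partial>PP (2*k)) = (\<integral>u. (\<integral>v. HH k (merge I J (u, v)) \<partial>PiM J (\<lambda>_. M)) \<partial>PiM I (\<lambda>_. M))"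
    unfolding U by (rule PS.product_integral_fold[OF IJ intH])
  interpret P2: pair_sigma_finite "PiM I (\<lambda>_. M)" "PiM J (\<lambda>_. M)"
    by (simp add: pair_sigma_finite_def prob_space_imp_sigma_finite prob_space_PiM M)
  have intHm: "integrable (PiM I (\<lambda>_. M) \<Otimes>\<^sub>M PiM J (\<lambda>_. M)) (\<lambda>z. HH k (merge I J z))"
    by (rule integrable_distr[OF measurable_merge]) (simp add: PS.distr_merge[OF IJ] intH)
  have intInner: "integrable (PiM I (\<lambda>_. M)) (\<lambda>u. \<integral>v. HH k (merge I J (u, v)) \<partial>PiM J (\<lambda>_. M))"
    using P2.integrable_fst'[OF intHm] by simp
  have kJ: "k + i \<in> J" if "i < k" for i using that by (simp add: J_def)
  have mergeI: "merge I J (u, v) i = u i" if "i < k" for u v i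
    using that IJ by (simp add: I_def)
  have mergeJ: "merge I J (u, v) (k+i) = v (k+i)" if "i < k" for u v i
    using that IJ by (simp add: J_def)
  have HHm: "HH k (merge I J (u, v)) = (MAX x\<in>F. \<Sum>i<k. \<bar>L x (v (k+i))\<bar> - \<bar>L x (u i)\<bar>)" for u v
    unfolding HH_def by (auto intro!: arg_cong[where f=Max] image_cong sum.cong simp: mergeI mergeJ)
  have PI: "PiM I (\<lambda>_. M) = PP k" by (simp add: I_def)
  have "(\<integral>\<omega>. (MAX x\<in>F. \<Sum>i<k. mm x - \<bar>L x (\<omega> i)\<bar>) \<partial>PiM I (\<lambda>_. M))
      \<le> (\<integral>u. (\<integral>v. HH k (merge I J (u, v)) \<partial>PiM J (\<lambda>_. M)) \<partial>PiM I (\<lambda>_. M))"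
  proof (rule integral_mono)
    show "integrable (PiM I (\<lambda>_. M)) (\<lambda>\<omega>. MAX x\<in>F. \<Sum>i<k. mm x - \<bar>L x (\<omega> i)\<bar>)"
      by (auto intro!: intg_rulesI simp: I_def)
    show "integrable (PiM I (\<lambda>_. M)) (\<lambda>u. \<integral>v. HH k (merge I J (u, v)) \<partial>PiM J (\<lambda>_. M))"
      by (fact intInner)
    fix u assume u: "u \<in> space (PiM I (\<lambda>_. M))"
    have intv: "integrable (PiM J (\<lambda>_. M)) (\<lambda>v. HH k (merge I J (u, v)))"
      unfolding HHm by (auto intro!: intg_rulesI simp: J_def)
    show "(MAX x\<in>F. \<Sum>i<k. mm x - \<bar>L x (u i)\<bar>) \<le> (\<integral>v. HH k (merge I J (u, v)) \<partial>PiM J (\<lambda>_. M))"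
    proof (subst Max_le_iff)
      show "finite ((\<lambda>x. \<Sum>i<k. mm x - \<bar>L x (u i)\<bar>) ` F)" using finF by simp
      show "(\<lambda>x. \<Sum>i<k. mm x - \<bar>L x (u i)\<bar>) ` F \<noteq> {}" using neF by simp
      show "\<forall>a\<in>(\<lambda>x. \<Sum>i<k. mm x - \<bar>L x (u i)\<bar>) ` F. a \<le> (\<integral>v. HH k (merge I J (u, v)) \<partial>PiM J (\<lambda>_. M))"
      proof
        fix a assume "a \<in> (\<lambda>x. \<Sum>i<k. mm x - \<bar>L x (u i)\<bar>) ` F"
        then obtain x where x: "x \<in> F" and a: "a = (\<Sum>i<k. mm x - \<bar>L x (u i)\<bar>)" by auto
        have comp: "(\<integral>v. \<bar>L x (v (k+i))\<bar> \<partial>PiM J (\<lambda>_. M)) = mm x" if "i < k" for i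
          unfolding mm_def using that x
          by (intro PiM_comp_integral M integrable_abs Lint) (auto simp: J_def)
        have "a = (\<integral>v. (\<Sum>i<k. \<bar>L x (v (k+i))\<bar> - \<bar>L x (u i)\<bar>) \<partial>PiM J (\<lambda>_. M))"
        proof -
          interpret J: prob_space "PiM J (\<lambda>_. M)" by (intro prob_space_PiM M)
          have "(\<integral>v. (\<Sum>i<k. \<bar>L x (v (k+i))\<bar> - \<bar>L x (u i)\<bar>) \<partial>PiM J (\<lambda>_. M))
              = (\<Sum>i<k. (\<integral>v. \<bar>L x (v (k+i))\<bar> - \<bar>L x (u i)\<bar> \<partial>PiM J (\<lambda>_. M)))"
            using x by (intro Bochner_Integration.integral_sum) (auto intro!: intg_rulesI simp: J_def)
          also have "\<dots> = (\<Sum>i<k. mm x - \<bar>L x (u i)\<bar>)"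
            using x by (intro sum.cong refl, subst Bochner_Integration.integral_diff) (auto intro!: intg_rulesI simp: kJ comp J.prob_space)
          finally show ?thesis using a by simp
        qed
        also have "\<dots> \<le> (\<integral>v. HH k (merge I J (u, v)) \<partial>PiM J (\<lambda>_. M))"
        proof (rule integral_mono)
          show "integrable (PiM J (\<lambda>_. M)) (\<lambda>v. \<Sum>i<k. \<bar>L x (v (k + i))\<bar> - \<bar>L x (u i)\<bar>)"
            using x by (auto intro!: intg_rulesI simp: J_def)
          show "integrable (PiM J (\<lambda>_. M)) (\<lambda>v. HH k (merge I J (u, v)))" by (fact intv)
          fix v show "(\<Sum>i<k. \<bar>L x (v (k + i))\<bar> - \<bar>L x (u i)\<bar>) \<le> HH k (merge I J (u, v))"
            unfolding HHm using x finF by (intro Max_ge) auto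
        qed
        finally show "a \<le> (\<integral>v. HH k (merge I J (u, v)) \<partial>PiM J (\<lambda>_. M))" .
      qed
    qed
  qed
  also have "\<dots> = (\<integral>\<omega>. HH k \<omega> \<partial>PP (2*k))" using fold by simp
  finally show ?thesis unfolding PI .
qed

end



context symset begin

lemma main_sym:
  "(\<integral>\<omega>. (MAX x\<in>F. \<Sum>i<k. mm x - \<bar>L x (\<omega> i)\<bar>) \<partial>PP k)
     \<le> 2 * (\<integral>\<omega>. (MAX x\<in>F. \<Sum>i<k. L x (\<omega> i)) \<partial>PP k)"
proof -
  define B0 where "B0 = (\<integral>\<omega>. (MAX x\<in>F. \<Sum>i<k. L x (\<omega> i)) \<partial>PP k)"
  define HS where "HS S \<omega> = (MAX x\<in>F. \<Sum>i<k. sg S i * (\<bar>L x (\<omega> (k+i))\<bar> - \<bar>L x (\<omega> i)\<bar>))" for S \<omega>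
  define AS where "AS S \<omega> = (MAX x\<in>F. \<Sum>i<k. sg S i * \<bar>L x (\<omega> (k+i))\<bar>)" for S \<omega>
  define BS where "BS S \<omega> = (MAX x\<in>F. \<Sum>i<k. - sg S i * \<bar>L x (\<omega> i)\<bar>)" for S \<omega>
  define A2 where "A2 S \<omega> = (MAX x\<in>F. \<Sum>i<k. sg S i * L x (\<omega> (k+i)))" for S \<omega>
  define B2 where "B2 S \<omega> = (MAX x\<in>F. \<Sum>i<k. sg S i * L x (\<omega> i))" for S \<omega>
  have kk: "k + i < 2 * k" "i < 2 * k" if "i < k" for i using that by auto
  have iHS: "integrable (PP (2*k)) (HS S)" for S
    unfolding HS_def by (intro integrable_MAX[OF finF neF] Bochner_Integration.integrable_sum
      Bochner_Integration.integrable_mult_right Bochner_Integration.integrable_diff intgI_abs) auto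
  have iAS: "integrable (PP (2*k)) (AS S)" for S
    unfolding AS_def by (intro integrable_MAX[OF finF neF] Bochner_Integration.integrable_sum
      Bochner_Integration.integrable_mult_right intgI_abs) auto
  have iBS: "integrable (PP (2*k)) (BS S)" for S
    unfolding BS_def by (intro integrable_MAX[OF finF neF] Bochner_Integration.integrable_sum
      Bochner_Integration.integrable_mult_right intgI_abs) auto
  have iA2: "integrable (PP (2*k)) (A2 S)" for S
    unfolding A2_def by (intro integrable_MAX[OF finF neF] Bochner_Integration.integrable_sum
      Bochner_Integration.integrable_mult_right intgI) auto
  have iB2: "integrable (PP (2*k)) (B2 S)" for S
    unfolding B2_def by (intro integrable_MAX[OF finF neF] Bochner_Integration.integrable_sum
      Bochner_Integration.integrable_mult_right intgI) auto
  have HS_le: "HS S \<omega> \<le> AS S \<omega> + BS S \<omega>" for S \<omega>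
  proof -
    have "HS S \<omega> \<in> (\<lambda>x. \<Sum>i<k. sg S i * (\<bar>L x (\<omega> (k+i))\<bar> - \<bar>L x (\<omega> i)\<bar>)) ` F"
      unfolding HS_def using finF neF by (intro Max_in) auto
    then obtain x where x: "x \<in> F" and hx: "HS S \<omega> = (\<Sum>i<k. sg S i * (\<bar>L x (\<omega> (k+i))\<bar> - \<bar>L x (\<omega> i)\<bar>))"
      by auto
    have "HS S \<omega> = (\<Sum>i<k. sg S i * \<bar>L x (\<omega> (k+i))\<bar>) + (\<Sum>i<k. - sg S i * \<bar>L x (\<omega> i)\<bar>)"
      unfolding hx by (simp add: sum.distrib[symmetric] algebra_simps sum_negf)
    also have "\<dots> \<le> AS S \<omega> + BS S \<omega>"
      unfolding AS_def BS_def using x finF by (intro add_mono Max_ge) auto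
    finally show ?thesis .
  qed
  have sumA: "(\<Sum>S\<in>Pow {..<k}. AS S \<omega>) \<le> (\<Sum>S\<in>Pow {..<k}. A2 S \<omega>)" for \<omega>
    using contraction[OF finF neF, where b="\<lambda>_. 0" and k=k and a="\<lambda>i x. L x (\<omega> (k+i))"]
    by (simp add: AS_def A2_def)
  have sumB: "(\<Sum>S\<in>Pow {..<k}. BS S \<omega>) \<le> (\<Sum>S\<in>Pow {..<k}. B2 S \<omega>)" for \<omega>
    using contraction[OF finF neF, where b="\<lambda>_. 0" and k=k and a="\<lambda>i x. L x (\<omega> i)"]
      sum_Pow_neg[where k=k and F=F and f="\<lambda>i x. \<bar>L x (\<omega> i)\<bar>"]
    by (simp add: BS_def B2_def)
  have A2int: "(\<integral>\<omega>. A2 S \<omega> \<partial>PP (2*k)) = B0" if S: "S \<subseteq> {..<k}" for S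
  proof -
    have "(\<integral>\<omega>. A2 S \<omega> \<partial>PP (2*k)) = (\<integral>\<omega>. (MAX x\<in>F. \<Sum>i<k. sg S i * L x (\<omega> i)) \<partial>PP k)"
      unfolding A2_def by (rule step3a) (auto simp: inj_on_def)
    also have "\<dots> = B0" unfolding B0_def by (rule step3b[OF S])
    finally show ?thesis .
  qed
  have B2int: "(\<integral>\<omega>. B2 S \<omega> \<partial>PP (2*k)) = B0" if S: "S \<subseteq> {..<k}" for S
  proof -
    have "(\<integral>\<omega>. B2 S \<omega> \<partial>PP (2*k)) = (\<integral>\<omega>. (MAX x\<in>F. \<Sum>i<k. sg S i * L x (\<omega> (id i))) \<partial>PP (2*k))"
      unfolding B2_def by simp
    also have "\<dots> = (\<integral>\<omega>. (MAX x\<in>F. \<Sum>i<k. sg S i * L x (\<omega> i)) \<partial>PP k)"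
      by (rule step3a) auto
    also have "\<dots> = B0" unfolding B0_def by (rule step3b[OF S])
    finally show ?thesis .
  qed
  have cardP: "real (card (Pow {..<k})) = 2 ^ k" by (simp add: card_Pow)
  have "real (card (Pow {..<k})) * (\<integral>\<omega>. HH k \<omega> \<partial>PP (2*k))
      = (\<Sum>S\<in>Pow {..<k}. (\<integral>\<omega>. HS S \<omega> \<partial>PP (2*k)))"
  proof -
    have "(\<Sum>S\<in>Pow {..<k}. (\<integral>\<omega>. HS S \<omega> \<partial>PP (2*k))) = (\<Sum>S\<in>Pow {..<k}. (\<integral>\<omega>. HH k \<omega> \<partial>PP (2*k)))"
      unfolding HS_def by (intro sum.cong refl) (auto intro: step2[symmetric])
    then show ?thesis by (simp add: sum_constant)
  qed
  also have "\<dots> = (\<integral>\<omega>. (\<Sum>S\<in>Pow {..<k}. HS S \<omega>) \<partial>PP (2*k))"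
    by (rule Bochner_Integration.integral_sum[symmetric]) (rule iHS)
  also have "\<dots> \<le> (\<integral>\<omega>. (\<Sum>S\<in>Pow {..<k}. A2 S \<omega>) + (\<Sum>S\<in>Pow {..<k}. B2 S \<omega>) \<partial>PP (2*k))"
  proof (rule integral_mono)
    show "integrable (PP (2*k)) (\<lambda>\<omega>. \<Sum>S\<in>Pow {..<k}. HS S \<omega>)"
      using iHS by auto
    show "integrable (PP (2*k)) (\<lambda>\<omega>. (\<Sum>S\<in>Pow {..<k}. A2 S \<omega>) + (\<Sum>S\<in>Pow {..<k}. B2 S \<omega>))"
      using iA2 iB2 by auto
    fix \<omega>
    have "(\<Sum>S\<in>Pow {..<k}. HS S \<omega>) \<le> (\<Sum>S\<in>Pow {..<k}. AS S \<omega>) + (\<Sum>S\<in>Pow {..<k}. BS S \<omega>)"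
      unfolding sum.distrib[symmetric] by (intro sum_mono HS_le)
    also have "\<dots> \<le> (\<Sum>S\<in>Pow {..<k}. A2 S \<omega>) + (\<Sum>S\<in>Pow {..<k}. B2 S \<omega>)"
      by (intro add_mono sumA sumB)
    finally show "(\<Sum>S\<in>Pow {..<k}. HS S \<omega>) \<le> (\<Sum>S\<in>Pow {..<k}. A2 S \<omega>) + (\<Sum>S\<in>Pow {..<k}. B2 S \<omega>)" .
  qed
  also have "\<dots> = (\<Sum>S\<in>Pow {..<k}. (\<integral>\<omega>. A2 S \<omega> \<partial>PP (2*k))) + (\<Sum>S\<in>Pow {..<k}. (\<integral>\<omega>. B2 S \<omega> \<partial>PP (2*k)))"
    using iA2 iB2 by (simp add: Bochner_Integration.integral_sum)
  also have "\<dots> = real (card (Pow {..<k})) * (2 * B0)"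
    using A2int B2int by simp
  finally have "real (card (Pow {..<k})) * (\<integral>\<omega>. HH k \<omega> \<partial>PP (2*k)) \<le> real (card (Pow {..<k})) * (2 * B0)" .
  then have "(\<integral>\<omega>. HH k \<omega> \<partial>PP (2*k)) \<le> 2 * B0"
    unfolding cardP by simp
  then show ?thesis using step1[of k] unfolding B0_def by linarith
qed

end



lemma norm_n_L2: "norm_n n x = L2_set x {..<n}"
  by (simp add: norm_n_def L2_set_def)

lemma norm_n_nonneg: "norm_n n x \<ge> 0"
  by (simp add: norm_n_def sum_nonneg)

lemma norm_n_scale: "norm_n n (\<lambda>i. a * x i) = \<bar>a\<bar> * norm_n n x"
proof -
  have "norm_n n (\<lambda>i. a * x i) = norm_n n (\<lambda>i. \<bar>a\<bar> * x i)"
    by (simp add: norm_n_def power_mult_distrib)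
  also have "\<dots> = \<bar>a\<bar> * norm_n n x"
    unfolding norm_n_L2 by (rule L2_set_right_distrib[symmetric]) simp
  finally show ?thesis .
qed

lemma norm_n_neg: "norm_n n (\<lambda>i. - x i) = norm_n n x"
  by (simp add: norm_n_def)

lemma norm_n_triangle: "norm_n n (\<lambda>i. x i + y i) \<le> norm_n n x + norm_n n y"
  unfolding norm_n_L2 by (rule L2_set_triangle_ineq)

lemma norm_n_diff: "norm_n n (\<lambda>i. x i - y i) \<le> norm_n n x + norm_n n y"
  using norm_n_triangle[of n x "\<lambda>i. - y i"] by (simp add: norm_n_neg)

lemma norm_n_diff_tri: "norm_n n (\<lambda>i. x i - z i) \<le> norm_n n (\<lambda>i. x i - y i) + norm_n n (\<lambda>i. y i - z i)"
  using norm_n_triangle[of n "\<lambda>i. x i - y i" "\<lambda>i. y i - z i"] by simp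

lemma inner_n_CS: "\<bar>inner_n n x y\<bar> \<le> norm_n n x * norm_n n y"
proof -
  have "\<bar>inner_n n x y\<bar> \<le> (\<Sum>i<n. \<bar>x i\<bar> * \<bar>y i\<bar>)"
    unfolding inner_n_def by (rule order.trans[OF sum_abs]) (simp add: abs_mult)
  also have "\<dots> \<le> norm_n n x * norm_n n y"
    unfolding norm_n_L2 by (rule L2_set_mult_ineq)
  finally show ?thesis .
qed

lemma inner_n_commute: "inner_n n x y = inner_n n y x"
  by (simp add: inner_n_def mult.commute)

lemma inner_n_diff: "inner_n n x (\<lambda>i. y i - z i) = inner_n n x y - inner_n n x z"
  by (simp add: inner_n_def algebra_simps sum_subtractf)

lemma inner_n_scale: "inner_n n (\<lambda>i. a * x i) y = a * inner_n n x y"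
  by (simp add: inner_n_def sum_distrib_left algebra_simps)

lemma norm_n_zero_iff: "norm_n n x = 0 \<longleftrightarrow> (\<forall>i<n. x i = 0)"
  unfolding norm_n_L2 by (auto simp: L2_set_eq_0_iff)

lemma norm_n_zero_inner: "norm_n n x = 0 \<Longrightarrow> inner_n n x y = 0"
  by (simp add: norm_n_zero_iff inner_n_def)

lemma cb_zero:
  assumes "convex_body n T" shows "(\<lambda>_. 0) \<in> T"
proof -
  from assms obtain x0 r where x0: "x0 \<in> Rn n" "r > 0" "{y\<in>Rn n. norm_n n (\<lambda>i. y i - x0 i) < r} \<subseteq> T"
    unfolding convex_body_def by blast
  have "x0 \<in> T" using x0 by (auto simp: norm_n_def)
  have conv: "\<forall>x\<in>T. \<forall>y\<in>T. \<forall>u::real. 0 \<le> u \<and> u \<le> 1 \<longrightarrow> (\<lambda>i. u * x i + (1 - u) * y i) \<in> T"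
    and sym: "\<forall>x\<in>T. (\<lambda>i. - x i) \<in> T"
    using assms unfolding convex_body_def by blast+
  have "(\<lambda>i. - x0 i) \<in> T" using sym \<open>x0 \<in> T\<close> by blast
  then have "(\<lambda>i. (1/2) * x0 i + (1 - 1/2) * (- x0 i)) \<in> T"
    using conv \<open>x0 \<in> T\<close> by (intro conv[rule_format]) auto
  then show ?thesis by simp
qed

lemma cb_scale:
  assumes "convex_body n T" "x \<in> T" "0 \<le> u" "u \<le> 1"
  shows "(\<lambda>i. u * x i) \<in> T"
proof -
  have conv: "\<forall>x\<in>T. \<forall>y\<in>T. \<forall>u::real. 0 \<le> u \<and> u \<le> 1 \<longrightarrow> (\<lambda>i. u * x i + (1 - u) * y i) \<in> T"
    using assms unfolding convex_body_def by blast
  have "(\<lambda>i. u * x i + (1 - u) * 0) \<in> T"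
    using cb_zero[OF assms(1)] assms by (intro conv[rule_format]) auto
  then show ?thesis by simp
qed

lemma ker_inner:
  assumes "x \<in> ker_Gamma n k w" "i < k"
  shows "inner_n n (w i) x = 0"
proof -
  have "(\<lambda>j. (\<Sum>i<k. inner_n n (w i) x * (if j = i then 1 else 0)) / sqrt (real k)) = (\<lambda>j. 0)"
    using assms(1) unfolding ker_Gamma_def by blast
  then have h: "(\<Sum>i'<k. inner_n n (w i') x * (if i = i' then 1 else 0)) / sqrt (real k) = 0"
    by (rule fun_cong)
  have "(\<Sum>i'<k. inner_n n (w i') x * (if i = i' then 1 else 0)) = (\<Sum>i'<k. if i' = i then inner_n n (w i') x else 0)"
    by (rule sum.cong) auto
  also have "\<dots> = inner_n n (w i) x"
    using assms(2) by (subst sum.delta) auto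
  finally have "inner_n n (w i) x / sqrt (real k) = 0" using h by simp
  moreover have "sqrt (real k) > 0" using assms(2) by simp
  ultimately show ?thesis by simp
qed




locale conc =
  fixes n k :: nat and \<mu> :: "(nat \<Rightarrow> real) measure" and T :: "(nat \<Rightarrow> real) set" and lam :: real
  assumes k1: "k \<ge> 1" and lam: "lam > 0" and P\<mu>: "prob_space \<mu>" and sets\<mu>: "sets \<mu> = sets (RnM n)"
    and sym\<mu>: "distr \<mu> (RnM n) (\<lambda>y. \<lambda>i\<in>{..<n}. - y i) = \<mu>"
    and iso: "\<forall>x\<in>Rn n. (\<integral>y. (inner_n n x y)\<^sup>2 \<partial>\<mu>) = (norm_n n x)\<^sup>2"
    and sb: "\<forall>x\<in>Rn n. measure \<mu> {y\<in>space \<mu>. \<bar>inner_n n x y\<bar> \<ge> lam * norm_n n x} \<ge> 99/100"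
    and cb: "convex_body n T"
begin

definition s :: "(nat \<Rightarrow> real) \<Rightarrow> (nat \<Rightarrow> real)" where "s y = (\<lambda>i\<in>{..<n}. - y i)"

lemma L_meas[measurable]: "inner_n n x \<in> borel_measurable \<mu>"
proof -
  have "(\<lambda>y. \<Sum>i<n. x i * y i) \<in> borel_measurable (RnM n)" by measurable
  then show ?thesis
    unfolding inner_n_def[abs_def] using measurable_cong_sets[OF sets\<mu> refl] by blast
qed

lemma L_int: assumes x: "x \<in> Rn n" shows "integrable \<mu> (inner_n n x)"
proof (cases "integrable \<mu> (\<lambda>y. (inner_n n x y)\<^sup>2)")
  case True
  interpret prob_space \<mu> by (fact P\<mu>)
  show ?thesis by (rule square_integrable_imp_integrable[OF L_meas True])
next
  case False
  have "(\<integral>y. (inner_n n x y)\<^sup>2 \<partial>\<mu>) = 0" by (rule not_integrable_integral_eq[OF False])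
  then have "(norm_n n x)\<^sup>2 = 0" using iso x by simp
  then have "norm_n n x = 0" by simp
  then have "inner_n n x = (\<lambda>_. 0)" using norm_n_zero_inner by blast
  then show ?thesis by simp
qed

lemma s_meas: "s \<in> measurable \<mu> \<mu>"
proof -
  have "s \<in> measurable (RnM n) (RnM n)" unfolding s_def by measurable
  then show ?thesis using measurable_cong_sets[OF sets\<mu> sets\<mu>] by blast
qed

lemma s_distr: "distr \<mu> \<mu> s = \<mu>"
proof -
  have "distr \<mu> \<mu> s = distr \<mu> (RnM n) (\<lambda>y. \<lambda>i\<in>{..<n}. - y i)"
    by (rule distr_cong) (auto simp: sets\<mu> s_def)
  then show ?thesis using sym\<mu> by simp
qed

lemma L_s: "inner_n n x (s y) = - inner_n n x y"
  by (simp add: s_def inner_n_def sum_negf)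

lemma symset_F:
  assumes "finite F" "F \<noteq> {}" "F \<subseteq> Rn n"
  shows "symset \<mu> (inner_n n) s F"
  by (rule symset.intro[OF P\<mu> assms(1,2) _ s_meas s_distr]) (use assms in \<open>auto intro: L_int simp: L_s\<close>)

lemma mm_lower:
  assumes x: "x \<in> Rn n"
  shows "(\<integral>y. \<bar>inner_n n x y\<bar> \<partial>\<mu>) \<ge> 99/100 * lam * norm_n n x"
proof -
  interpret prob_space \<mu> by (fact P\<mu>)
  define A where "A = {y\<in>space \<mu>. \<bar>inner_n n x y\<bar> \<ge> lam * norm_n n x}"
  have A: "A \<in> sets \<mu>" unfolding A_def by measurable
  have c0: "lam * norm_n n x \<ge> 0" using lam norm_n_nonneg[of n x] by simp
  have "99/100 * lam * norm_n n x \<le> (lam * norm_n n x) * measure \<mu> A"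
  proof -
    have p: "99/100 \<le> measure \<mu> A" using sb x unfolding A_def by auto
    have "99/100 * lam * norm_n n x = (99/100) * (lam * norm_n n x)" by simp
    also have "\<dots> \<le> measure \<mu> A * (lam * norm_n n x)" by (rule mult_right_mono[OF p c0])
    finally show ?thesis by (simp add: mult.commute)
  qed
  also have "\<dots> = (\<integral>y. (lam * norm_n n x) * indicator A y \<partial>\<mu>)"
    using A by simp
  also have "\<dots> \<le> (\<integral>y. \<bar>inner_n n x y\<bar> \<partial>\<mu>)"
  proof (rule integral_mono)
    show "integrable \<mu> (\<lambda>y. lam * norm_n n x * indicator A y)"
      using A by (intro Bochner_Integration.integrable_mult_right integrable_real_indicator) (auto simp: less_top[symmetric])
    show "integrable \<mu> (\<lambda>y. \<bar>inner_n n x y\<bar>)" using L_int[OF x] by (rule integrable_abs)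
    fix y show "lam * norm_n n x * indicator A y \<le> \<bar>inner_n n x y\<bar>"
      using c0 by (auto simp: A_def indicator_def)
  qed
  finally show ?thesis .
qed

end



context conc begin

abbreviation PK :: "(nat \<Rightarrow> nat \<Rightarrow> real) measure" where "PK \<equiv> PiM {..<k} (\<lambda>_. \<mu>)"

definition DS :: "(nat \<Rightarrow> nat \<Rightarrow> real) \<Rightarrow> ennreal" where
  "DS w = dual_norm n T (\<lambda>j. (\<Sum>i<k. w i j) / sqrt (real k))"

lemma T_Rn: "T \<subseteq> Rn n" using cb unfolding convex_body_def by blast

lemma sum_inner_S:
  "(\<Sum>i<k. inner_n n x (w i)) = sqrt (real k) * inner_n n (\<lambda>j. (\<Sum>i<k. w i j) / sqrt (real k)) x"
proof -
  have sk: "sqrt (real k) > 0" using k1 by simp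
  have "inner_n n (\<lambda>j. (\<Sum>i<k. w i j) / sqrt (real k)) x = (\<Sum>j<n. (\<Sum>i<k. w i j * x j)) / sqrt (real k)"
    unfolding inner_n_def by (simp add: sum_divide_distrib sum_distrib_right)
  also have "(\<Sum>j<n. (\<Sum>i<k. w i j * x j)) = (\<Sum>i<k. inner_n n x (w i))"
    unfolding inner_n_def by (subst sum.swap) (simp add: mult.commute)
  finally show ?thesis using sk by simp
qed

lemma dual_bound:
  assumes F: "finite F" "F \<noteq> {}" "F \<subseteq> T" and e: "e \<ge> 0"
    and ES: "(\<integral>\<^sup>+ w. DS w \<partial>PK) = ennreal e"
  shows "(\<integral>w. (MAX x\<in>F. \<Sum>i<k. inner_n n x (w i)) \<partial>PK) \<le> sqrt (real k) * e"
proof -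
  interpret symset \<mu> "inner_n n" s F using symset_F F T_Rn by blast
  define g where "g w = (MAX x\<in>F. \<Sum>i<k. inner_n n x (w i))" for w
  have sk: "sqrt (real k) > 0" using k1 by simp
  have ig: "integrable PK g"
    unfolding g_def by (intro integrable_MAX[OF finF neF] Bochner_Integration.integrable_sum intgI) auto
  have pw: "ennreal (\<bar>g w\<bar> / sqrt (real k)) \<le> DS w" for w
  proof -
    have "g w \<in> (\<lambda>x. \<Sum>i<k. inner_n n x (w i)) ` F"
      unfolding g_def using F by (intro Max_in) auto
    then obtain x0 where x0: "x0 \<in> F" and gx: "g w = (\<Sum>i<k. inner_n n x0 (w i))" by auto
    have "\<bar>g w\<bar> / sqrt (real k) = \<bar>inner_n n (\<lambda>j. (\<Sum>i<k. w i j) / sqrt (real k)) x0\<bar>"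
      unfolding gx sum_inner_S using sk by (simp add: abs_mult)
    also have "ennreal \<dots> \<le> DS w"
      unfolding DS_def dual_norm_def using x0 F by (intro SUP_upper) auto
    finally show ?thesis .
  qed
  have "ennreal ((\<integral>w. \<bar>g w\<bar> \<partial>PK) / sqrt (real k)) = ennreal (\<integral>w. \<bar>g w\<bar> / sqrt (real k) \<partial>PK)"
    by simp
  also have "\<dots> = (\<integral>\<^sup>+ w. ennreal (\<bar>g w\<bar> / sqrt (real k)) \<partial>PK)"
    using ig by (intro nn_integral_eq_integral[symmetric]) auto
  also have "\<dots> \<le> (\<integral>\<^sup>+ w. DS w \<partial>PK)"
    by (intro nn_integral_mono pw)
  finally have "(\<integral>w. \<bar>g w\<bar> \<partial>PK) / sqrt (real k) \<le> e"
    using ES e by (simp add: ennreal_le_iff)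
  then have "(\<integral>w. \<bar>g w\<bar> \<partial>PK) \<le> sqrt (real k) * e"
    using sk by (simp add: divide_le_eq mult.commute)
  moreover have "(\<integral>w. g w \<partial>PK) \<le> (\<integral>w. \<bar>g w\<bar> \<partial>PK)"
    using ig by (intro integral_mono) auto
  ultimately show ?thesis unfolding g_def by simp
qed

end



definition vq :: "rat list \<Rightarrow> nat \<Rightarrow> real" where
  "vq q = (\<lambda>i. if i < length q then of_rat (q ! i) else 0)"

lemma some_bex: "\<exists>y\<in>A. P y \<Longrightarrow> (SOME y. y \<in> A \<and> P y) \<in> A \<and> P (SOME y. y \<in> A \<and> P y)"
proof -
  assume "\<exists>y\<in>A. P y"
  then have "\<exists>y. y \<in> A \<and> P y" by blast
  then show ?thesis by (rule someI_ex)
qed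

lemma norm_n_sym: "norm_n n (\<lambda>i. x i - y i) = norm_n n (\<lambda>i. y i - x i)"
  by (simp add: norm_n_def power2_commute)

lemma rat_approx:
  assumes "\<eta> > 0"
  shows "\<exists>q. norm_n n (\<lambda>i. x i - vq q i) < \<eta>"
proof -
  define \<eta>' where "\<eta>' = \<eta> / (real n + 1)"
  have \<eta>': "\<eta>' > 0" using assms by (simp add: \<eta>'_def)
  have "\<forall>i. \<exists>r::rat. \<bar>x i - of_rat r\<bar> < \<eta>'"
  proof
    fix i
    obtain a where a: "a \<in> \<rat>" "x i < a" "a < x i + \<eta>'"
      using Rats_dense_in_real[of "x i" "x i + \<eta>'"] \<eta>' by auto
    then obtain r where "a = of_rat r" by (auto elim: Rats_cases)
    then show "\<exists>r::rat. \<bar>x i - of_rat r\<bar> < \<eta>'" using a by (intro exI[of _ r]) auto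
  qed
  then obtain f where f: "\<And>i. \<bar>x i - of_rat (f i)\<bar> < \<eta>'" by metis
  define q where "q = map f [0..<n]"
  have vqi: "vq q i = of_rat (f i)" if "i < n" for i
    using that by (simp add: vq_def q_def)
  have "norm_n n (\<lambda>i. x i - vq q i) \<le> (\<Sum>i<n. \<bar>x i - vq q i\<bar>)"
    unfolding norm_n_L2 by (rule L2_set_le_sum_abs)
  also have "\<dots> \<le> (\<Sum>i<n. \<eta>')"
    by (intro sum_mono) (auto simp: vqi f less_imp_le)
  also have "\<dots> = real n * \<eta>'" by simp
  also have "\<dots> < \<eta>" using assms by (simp add: \<eta>'_def field_simps)
  finally show ?thesis by blast
qed

context conc begin

definition KK :: "real \<Rightarrow> (nat \<Rightarrow> real) set" where
  "KK r = {x\<in>T. norm_n n x = r}"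

definition pick :: "real \<Rightarrow> rat list \<times> nat \<Rightarrow> (nat \<Rightarrow> real)" where
  "pick r qm = (if \<exists>y\<in>KK r. norm_n n (\<lambda>i. y i - vq (fst qm) i) < 1 / real (Suc (snd qm))
      then SOME y. y \<in> KK r \<and> norm_n n (\<lambda>i. y i - vq (fst qm) i) < 1 / real (Suc (snd qm))
      else (\<lambda>_. 0))"

definition dd :: "real \<Rightarrow> nat \<Rightarrow> (nat \<Rightarrow> real)" where
  "dd r j = pick r (from_nat j)"

lemma dd_T: "dd r j \<in> T"
proof (cases "\<exists>y\<in>KK r. norm_n n (\<lambda>i. y i - vq (fst (from_nat j :: rat list \<times> nat)) i) < 1 / real (Suc (snd (from_nat j :: rat list \<times> nat)))")
  case True
  then have "pick r (from_nat j) \<in> KK r"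
    unfolding pick_def if_P[OF True] using some_bex[OF True] by blast
  then show ?thesis by (simp add: dd_def KK_def)
next
  case False
  then show ?thesis using cb_zero[OF cb] by (simp add: dd_def pick_def)
qed

lemma dd_dense:
  assumes x: "x \<in> KK r" and \<delta>: "\<delta> > 0"
  shows "\<exists>j. dd r j \<in> KK r \<and> norm_n n (\<lambda>i. dd r j i - x i) < \<delta>"
proof -
  obtain m where m: "inverse (real (Suc m)) < \<delta> / 2" using reals_Archimedean[of "\<delta>/2"] \<delta> by auto
  have pos: "1 / real (Suc m) > 0" by simp
  obtain q where q: "norm_n n (\<lambda>i. x i - vq q i) < 1 / real (Suc m)"
    using rat_approx[OF pos] by blast
  define j where "j = to_nat (q, m)"
  have fj: "from_nat j = (q, m)" by (simp add: j_def)
  have ex: "\<exists>y\<in>KK r. norm_n n (\<lambda>i. y i - vq q i) < 1 / real (Suc m)" using x q by blast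
  have pj: "dd r j \<in> KK r \<and> norm_n n (\<lambda>i. dd r j i - vq q i) < 1 / real (Suc m)"
    unfolding dd_def fj pick_def fst_conv snd_conv if_P[OF ex] by (rule some_bex[OF ex])
  have "norm_n n (\<lambda>i. dd r j i - x i) \<le> norm_n n (\<lambda>i. dd r j i - vq q i) + norm_n n (\<lambda>i. vq q i - x i)"
    by (rule norm_n_diff_tri)
  also have "\<dots> < 1 / real (Suc m) + 1 / real (Suc m)"
    using pj q norm_n_sym[of n x "vq q"] by linarith
  also have "\<dots> < \<delta>" using m by (simp add: inverse_eq_divide)
  finally show ?thesis using pj by blast
qed

end



context conc begin

definition C0 :: real where "C0 = 99/100 * lam"
definition mmc :: "(nat \<Rightarrow> real) \<Rightarrow> real" where "mmc x = (\<integral>y. \<bar>inner_n n x y\<bar> \<partial>\<mu>)"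

lemma C0_pos: "C0 > 0" using lam by (simp add: C0_def)

lemma inner_zero: "inner_n n (\<lambda>_. 0) y = 0" by (simp add: inner_n_def)

lemma bad_event:
  assumes r: "r > 0" and e: "e \<ge> 0" and ES: "(\<integral>\<^sup>+ w. DS w \<partial>PK) = ennreal e"
  shows "\<exists>N \<in> sets PK. measure PK N \<le> 4 * e / (sqrt (real k) * C0 * r) \<and>
           (\<forall>w\<in>space PK. \<forall>x\<in>T \<inter> ker_Gamma n k w. norm_n n x \<ge> r \<longrightarrow> w \<in> N)"
proof -
  interpret PKp: prob_space PK by (intro prob_space_PiM P\<mu>)
  define Fm where "Fm m = insert (\<lambda>_. 0) (dd r ` {..m})" for m
  have Fm_fin: "finite (Fm m)" "Fm m \<noteq> {}" for m by (auto simp: Fm_def)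
  have Fm_T: "Fm m \<subseteq> T" for m using dd_T cb_zero[OF cb] by (auto simp: Fm_def)
  have Fm_Rn: "Fm m \<subseteq> Rn n" for m using Fm_T T_Rn by blast
  define Z where "Z m w = (MAX x\<in>Fm m. \<Sum>i<k. mmc x - \<bar>inner_n n x (w i)\<bar>)" for m w
  define a where "a = real k * C0 * r / 2"
  have sk: "sqrt (real k) > 0" using k1 by simp
  have a: "a > 0" using k1 C0_pos r by (simp add: a_def)
  have Zint: "integrable PK (Z m)" for m
  proof -
    interpret symset \<mu> "inner_n n" s "Fm m" by (rule symset_F[OF Fm_fin(1) Fm_fin(2) Fm_Rn])
    show ?thesis unfolding Z_def
      by (intro integrable_MAX[OF finF neF] Bochner_Integration.integrable_sum
          Bochner_Integration.integrable_diff intgI_abs intgI_const) auto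
  qed
  have Zbound: "(\<integral>w. Z m w \<partial>PK) \<le> 2 * (sqrt (real k) * e)" for m
  proof -
    interpret symset \<mu> "inner_n n" s "Fm m" by (rule symset_F[OF Fm_fin(1) Fm_fin(2) Fm_Rn])
    have "(\<integral>w. Z m w \<partial>PK) \<le> 2 * (\<integral>\<omega>. (MAX x\<in>Fm m. \<Sum>i<k. inner_n n x (\<omega> i)) \<partial>PK)"
      using main_sym[of k] unfolding Z_def mm_def mmc_def .
    also have "\<dots> \<le> 2 * (sqrt (real k) * e)"
      using dual_bound[OF Fm_fin Fm_T e ES] by simp
    finally show ?thesis .
  qed
  have Znn: "Z m w \<ge> 0" for m w
  proof -
    have "mmc (\<lambda>_. 0) = 0" by (simp add: mmc_def inner_zero)
    then have "(\<Sum>i<k. mmc (\<lambda>_. 0) - \<bar>inner_n n (\<lambda>_. 0) (w i)\<bar>) = 0" by (simp add: inner_zero)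
    moreover have "(\<Sum>i<k. mmc (\<lambda>_. 0) - \<bar>inner_n n (\<lambda>_. 0) (w i)\<bar>) \<le> Z m w"
      unfolding Z_def using Fm_fin by (intro Max_ge) (auto simp: Fm_def)
    ultimately show ?thesis by simp
  qed
  define E where "E m = {w \<in> space PK. a \<le> Z m w}" for m
  have Zmeas[measurable]: "Z m \<in> borel_measurable PK" for m using Zint by auto
  have Esets: "E m \<in> sets PK" for m unfolding E_def by measurable
  have bnd: "2 * (sqrt (real k) * e) / a = 4 * e / (sqrt (real k) * C0 * r)"
  proof -
    have kk: "real k = sqrt (real k) * sqrt (real k)" by simp
    show ?thesis unfolding a_def using sk C0_pos r
      by (subst kk) (simp add: field_simps)
  qed
  have Emeas: "measure PK (E m) \<le> 4 * e / (sqrt (real k) * C0 * r)" for m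
  proof -
    have "measure PK (E m) \<le> (\<integral>w. Z m w \<partial>PK) / a"
      unfolding E_def by (rule integral_Markov_inequality_measure[OF Zint sets.top]) (auto simp: Znn a)
    also have "\<dots> \<le> 2 * (sqrt (real k) * e) / a"
      using Zbound a by (simp add: divide_right_mono)
    finally show ?thesis using bnd by simp
  qed
  have inc: "incseq E"
  proof (rule incseq_SucI)
    fix m
    have "Z m w \<le> Z (Suc m) w" for w
      unfolding Z_def using Fm_fin
      by (intro Max_mono image_mono) (auto simp: Fm_def)
    then show "E m \<subseteq> E (Suc m)" unfolding E_def by (auto intro: order.trans)
  qed
  define N where "N = (\<Union>m. E m)"
  have Nsets: "N \<in> sets PK" unfolding N_def using Esets by auto
  have Nmeas: "measure PK N \<le> 4 * e / (sqrt (real k) * C0 * r)"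
    unfolding N_def
    by (rule LIMSEQ_le_const2[OF PKp.finite_Lim_measure_incseq[OF _ inc]]) (use Esets Emeas in auto)
  have bad: "w \<in> N" if w: "w \<in> space PK" and xT: "x \<in> T" and xk: "x \<in> ker_Gamma n k w"
    and xr: "norm_n n x \<ge> r" for w x
  proof -
    have nx: "norm_n n x > 0" using xr r by linarith
    define u where "u = r / norm_n n x"
    have u: "0 \<le> u" "u \<le> 1" using nx xr r by (auto simp: u_def)
    define x' where "x' = (\<lambda>i. u * x i)"
    have x'T: "x' \<in> T" unfolding x'_def by (rule cb_scale[OF cb xT u])
    have nx': "norm_n n x' = r" unfolding x'_def norm_n_scale using u nx r by (simp add: u_def)
    have x'K: "x' \<in> KK r" using x'T nx' by (simp add: KK_def)
    have ix': "inner_n n (w i) x' = 0" if "i < k" for i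
    proof -
      have "inner_n n (w i) x' = u * inner_n n (w i) x"
        unfolding x'_def by (subst inner_n_commute, subst inner_n_scale, subst inner_n_commute) simp
      then show ?thesis using ker_inner[OF xk that] by simp
    qed
    define W where "W = (\<Sum>i<k. norm_n n (w i))"
    have W: "W \<ge> 0" unfolding W_def by (intro sum_nonneg norm_n_nonneg)
    define \<delta> where "\<delta> = a / (W + 1)"
    have \<delta>: "\<delta> > 0" using a W by (simp add: \<delta>_def)
    obtain j where j: "dd r j \<in> KK r" "norm_n n (\<lambda>i. dd r j i - x' i) < \<delta>"
      using dd_dense[OF x'K \<delta>] by blast
    define y where "y = dd r j"
    have yT: "y \<in> T" and ny: "norm_n n y = r" using j by (auto simp: y_def KK_def)
    have yRn: "y \<in> Rn n" using yT T_Rn by blast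
    have yF: "y \<in> Fm j" by (auto simp: Fm_def y_def)
    have each: "\<bar>inner_n n y (w i)\<bar> \<le> norm_n n (w i) * norm_n n (\<lambda>l. y l - x' l)" if "i < k" for i
    proof -
      have "inner_n n y (w i) = inner_n n (w i) (\<lambda>l. y l - x' l)"
        using ix'[OF that] by (simp add: inner_n_diff inner_n_commute)
      then show ?thesis using inner_n_CS by simp
    qed
    have "(\<Sum>i<k. \<bar>inner_n n y (w i)\<bar>) \<le> (\<Sum>i<k. norm_n n (w i) * norm_n n (\<lambda>l. y l - x' l))"
      by (intro sum_mono each) auto
    also have "\<dots> = W * norm_n n (\<lambda>l. y l - x' l)" by (simp add: W_def sum_distrib_right)
    also have "\<dots> \<le> W * \<delta>" using j W by (intro mult_left_mono) (auto simp: y_def)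
    also have "\<dots> < a" using a W by (simp add: \<delta>_def field_simps)
    finally have sl: "(\<Sum>i<k. \<bar>inner_n n y (w i)\<bar>) < a" .
    have my: "mmc y \<ge> C0 * r" using mm_lower[OF yRn] ny by (simp add: mmc_def C0_def)
    have "(\<Sum>i<k. mmc y - \<bar>inner_n n y (w i)\<bar>) = real k * mmc y - (\<Sum>i<k. \<bar>inner_n n y (w i)\<bar>)"
      by (simp add: sum_subtractf)
    also have "real k * mmc y \<ge> real k * (C0 * r)" using my by (intro mult_left_mono) auto
    moreover have "real k * (C0 * r) = 2 * a" by (simp add: a_def)
    ultimately have "(\<Sum>i<k. mmc y - \<bar>inner_n n y (w i)\<bar>) > a" using sl by linarith
    moreover have "(\<Sum>i<k. mmc y - \<bar>inner_n n y (w i)\<bar>) \<le> Z j w"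
      unfolding Z_def using Fm_fin yF by (intro Max_ge) auto
    ultimately have "a \<le> Z j w" by linarith
    then have "w \<in> E j" using w by (simp add: E_def)
    then show ?thesis by (auto simp: N_def)
  qed
  show ?thesis using Nsets Nmeas bad by blast
qed

end



lemma diam_le:
  assumes "\<And>x. x \<in> S \<Longrightarrow> norm_n n x \<le> \<rho>"
  shows "diam_n n S \<le> ennreal (2 * \<rho>)"
  unfolding diam_n_def
proof (intro SUP_least)
  fix x y assume x: "x \<in> S" and y: "y \<in> S"
  have "norm_n n (\<lambda>i. x i - y i) \<le> norm_n n x + norm_n n y" by (rule norm_n_diff)
  also have "\<dots> \<le> 2 * \<rho>" using assms[OF x] assms[OF y] by simp
  finally show "ennreal (norm_n n (\<lambda>i. x i - y i)) \<le> ennreal (2 * \<rho>)" by (rule ennreal_leI)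
qed

context conc begin

lemma final:
  "\<exists>A\<in>sets PK. measure PK A \<ge> 3/4 \<and>
        (\<forall>w\<in>A. diam_n n (T \<inter> ker_Gamma n k w)
           \<le> ennreal (32 / (99/100 * lam) / sqrt (real k)) *
              max (\<integral>\<^sup>+ g. dual_norm n T g \<partial>gaussM n)
                  (\<integral>\<^sup>+ w'. dual_norm n T (\<lambda>j. (\<Sum>i<k. w' i j) / sqrt (real k)) \<partial>PK))"
proof -
  interpret PKp: prob_space PK by (intro prob_space_PiM P\<mu>)
  define EG where "EG = (\<integral>\<^sup>+ g. dual_norm n T g \<partial>gaussM n)"
  define ES where "ES = (\<integral>\<^sup>+ w'. dual_norm n T (\<lambda>j. (\<Sum>i<k. w' i j) / sqrt (real k)) \<partial>PK)"
  have ESd: "(\<integral>\<^sup>+ w. DS w \<partial>PK) = ES" unfolding ES_def DS_def by simp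
  define c where "c = 32 / (99/100 * lam) / sqrt (real k)"
  have sk: "sqrt (real k) > 0" using k1 by simp
  have c: "c > 0" using lam sk by (simp add: c_def)
  have cC0: "c = 32 / C0 / sqrt (real k)" by (simp add: c_def C0_def)
  have main: "\<exists>A\<in>sets PK. measure PK A \<ge> 3/4 \<and>
        (\<forall>w\<in>A. diam_n n (T \<inter> ker_Gamma n k w) \<le> ennreal c * max EG ES)"
  proof (cases "ES = \<top>")
    case True
    have t: "ennreal c * max EG ES = \<top>" using True c by (simp add: ennreal_mult_top)
    show ?thesis unfolding t by (intro bexI[of _ "space PK"]) (auto simp: PKp.prob_space)
  next
    case False
    define e where "e = enn2real ES"
    have e: "e \<ge> 0" by (simp add: e_def)
    have ESe: "ES = ennreal e" using False by (simp add: e_def ennreal_enn2real_if)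
    show ?thesis
    proof (cases "e > 0")
      case True
      define r where "r = 16 * e / (sqrt (real k) * C0)"
      have r: "r > 0" using True sk C0_pos by (simp add: r_def)
      obtain N where N: "N \<in> sets PK" "measure PK N \<le> 4 * e / (sqrt (real k) * C0 * r)"
        and bad: "\<And>w x. w \<in> space PK \<Longrightarrow> x \<in> T \<inter> ker_Gamma n k w \<Longrightarrow> norm_n n x \<ge> r \<Longrightarrow> w \<in> N"
        using bad_event[OF r e ESd[unfolded ESe]] by blast
      have q: "4 * e / (sqrt (real k) * C0 * r) = 1/4"
        using True sk C0_pos by (simp add: r_def field_simps)
      have mA: "measure PK (space PK - N) \<ge> 3/4"
        using PKp.finite_measure_compl[OF N(1)] N(2) q by (simp add: PKp.prob_space)
      have "diam_n n (T \<inter> ker_Gamma n k w) \<le> ennreal c * max EG ES" if w: "w \<in> space PK - N" for w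
      proof -
        have "diam_n n (T \<inter> ker_Gamma n k w) \<le> ennreal (2 * r)"
        proof (rule diam_le)
          fix x assume "x \<in> T \<inter> ker_Gamma n k w"
          then show "norm_n n x \<le> r" using bad[of w x] w by force
        qed
        also have "2 * r = c * e" using sk C0_pos by (simp add: r_def cC0 field_simps)
        also have "ennreal (c * e) = ennreal c * ES" using c e ESe by (simp add: ennreal_mult)
        also have "\<dots> \<le> ennreal c * max EG ES" by (intro mult_left_mono) auto
        finally show ?thesis .
      qed
      then show ?thesis using mA N(1) by (intro bexI[of _ "space PK - N"]) auto
    next
      case False
      then have e0: "e = 0" using e by simp
      have "\<forall>m. \<exists>N \<in> sets PK. measure PK N \<le> 4 * e / (sqrt (real k) * C0 * (1 / real (Suc m))) \<and>
           (\<forall>w\<in>space PK. \<forall>x\<in>T \<inter> ker_Gamma n k w. norm_n n x \<ge> 1 / real (Suc m) \<longrightarrow> w \<in> N)"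
        by (intro allI bad_event[OF _ e ESd[unfolded ESe]]) simp
      then obtain NN where NN: "\<And>m. NN m \<in> sets PK"
        "\<And>m. measure PK (NN m) \<le> 4 * e / (sqrt (real k) * C0 * (1 / real (Suc m)))"
        "\<And>m w x. w \<in> space PK \<Longrightarrow> x \<in> T \<inter> ker_Gamma n k w \<Longrightarrow> norm_n n x \<ge> 1 / real (Suc m) \<Longrightarrow> w \<in> NN m"
        by metis
      have m0: "emeasure PK (NN m) = 0" for m
        using NN(2)[of m] e0 by (simp add: PKp.emeasure_eq_measure measure_le_0_iff)
      have U0: "emeasure PK (\<Union>m. NN m) = 0"
        by (rule emeasure_UN_eq_0) (use m0 NN(1) in auto)
      have Us: "(\<Union>m. NN m) \<in> sets PK" using NN(1) by auto
      have mA: "measure PK (space PK - (\<Union>m. NN m)) \<ge> 3/4"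
        using PKp.finite_measure_compl[OF Us] U0 by (simp add: PKp.prob_space PKp.emeasure_eq_measure)
      have "diam_n n (T \<inter> ker_Gamma n k w) \<le> ennreal c * max EG ES" if w: "w \<in> space PK - (\<Union>m. NN m)" for w
      proof -
        have "diam_n n (T \<inter> ker_Gamma n k w) \<le> ennreal (2 * 0)"
        proof (rule diam_le)
          fix x assume x: "x \<in> T \<inter> ker_Gamma n k w"
          show "norm_n n x \<le> 0"
          proof (rule ccontr)
            assume "\<not> norm_n n x \<le> 0"
            then obtain m where "inverse (real (Suc m)) < norm_n n x"
              using reals_Archimedean[of "norm_n n x"] by auto
            then have "w \<in> NN m" using NN(3)[of w x m] w x by (simp add: inverse_eq_divide)
            then show False using w by auto
          qed
        qed
        then show ?thesis by simp
      qed
      then show ?thesis using mA Us by (intro bexI[of _ "space PK - (\<Union>m. NN m)"]) auto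
    qed
  qed
  then show ?thesis unfolding EG_def ES_def c_def .
qed

end

theorem theorem1p3:
  fixes lam :: real
  assumes "lam > 0"
  shows "\<exists>c::real. \<forall>(n::nat) (k::nat) (\<mu>::(nat \<Rightarrow> real) measure) (T::(nat \<Rightarrow> real) set).
     n \<ge> 1 \<longrightarrow> k \<ge> 1 \<longrightarrow>
     prob_space \<mu> \<longrightarrow> sets \<mu> = sets (RnM n) \<longrightarrow>
     distr \<mu> (RnM n) (\<lambda>y. \<lambda>i\<in>{..<n}. - y i) = \<mu> \<longrightarrow>
     (\<forall>x\<in>Rn n. (\<integral>y. (inner_n n x y)\<^sup>2 \<partial>\<mu>) = (norm_n n x)\<^sup>2) \<longrightarrow>
     (\<forall>x\<in>Rn n. measure \<mu> {y\<in>space \<mu>. \<bar>inner_n n x y\<bar> \<ge> lam * norm_n n x} \<ge> 99/100) \<longrightarrow>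
     convex_body n T \<longrightarrow>
     (\<exists>A\<in>sets (PiM {..<k} (\<lambda>_. \<mu>)). measure (PiM {..<k} (\<lambda>_. \<mu>)) A \<ge> 3/4 \<and>
        (\<forall>w\<in>A. diam_n n (T \<inter> ker_Gamma n k w)
           \<le> ennreal (c / sqrt (real k)) *
              max (\<integral>\<^sup>+ g. dual_norm n T g \<partial>gaussM n)
                  (\<integral>\<^sup>+ w'. dual_norm n T (\<lambda>j. (\<Sum>i<k. w' i j) / sqrt (real k)) \<partial>(PiM {..<k} (\<lambda>_. \<mu>)))))"
proof (intro exI[of _ "32 / (99/100 * lam)"] allI impI)
  fix n k :: nat and \<mu> :: "(nat \<Rightarrow> real) measure" and T :: "(nat \<Rightarrow> real) set"
  assume h: "1 \<le> n" "1 \<le> k" "prob_space \<mu>" "sets \<mu> = sets (RnM n)"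
    "distr \<mu> (RnM n) (\<lambda>y. \<lambda>i\<in>{..<n}. - y i) = \<mu>"
    "\<forall>x\<in>Rn n. (\<integral>y. (inner_n n x y)\<^sup>2 \<partial>\<mu>) = (norm_n n x)\<^sup>2"
    "\<forall>x\<in>Rn n. measure \<mu> {y\<in>space \<mu>. \<bar>inner_n n x y\<bar> \<ge> lam * norm_n n x} \<ge> 99/100"
    "convex_body n T"
  interpret conc n k \<mu> T lam
    by (rule conc.intro) (use h assms in auto)
  show "\<exists>A\<in>sets (PiM {..<k} (\<lambda>_. \<mu>)). measure (PiM {..<k} (\<lambda>_. \<mu>)) A \<ge> 3/4 \<and>
        (\<forall>w\<in>A. diam_n n (T \<inter> ker_Gamma n k w)
           \<le> ennreal (32 / (99/100 * lam) / sqrt (real k)) *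
              max (\<integral>\<^sup>+ g. dual_norm n T g \<partial>gaussM n)
                  (\<integral>\<^sup>+ w'. dual_norm n T (\<lambda>j. (\<Sum>i<k. w' i j) / sqrt (real k)) \<partial>(PiM {..<k} (\<lambda>_. \<mu>))))"
    by (rule final)
qed


end
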